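(* In the setting below, $$\tau^*(K)=\langle \tau^*(q),\ \overline\varphi(\tau^*(r))\mid q\in Q,\ r\in R,\ \varphi\in\Phi^*\rangle,$$ the subgroup of $M$ generated by these elements.
   Context: Let $G=\langle S\mid Q\mid\Phi\mid R\rangle$ be given by a finite invariant $L$-presentation: $F$ is the free group on the finite set $S$, $Q,R\subseteq F$ finite, $\Phi$ a finite set of endomorphisms of $F$ with generated monoid $\Phi^*$, $K=\langle Q\cup\bigcup_{\varphi\in\Phi^*}\varphi(R)\rangle^F$, and invariance means $\varphi(K)\subseteq K$ for all $\varphi\in\Phi$. Let $n\ge3$ and $K_i:=K\gamma_i(F)$. Let $\tau^*:F\to H^*$ be an epimorphism onto a group $H^*$ with $\ker\tau^*=[K_{n-1},F]$, and let $M:=\tau^*(K_{n-1})$, a central (hence abelian) subgroup of $H^*$. For $\varphi\in\Phi^*$, $\overline\varphi$ denotes the endomorphism of $M$ with $\overline\varphi(\tau^*(k))=\tau^*(\varphi(k))$ for $k\in K_{n-1}$. *)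

theory Defs
  imports "HOL-Algebra.Algebra"
begin

definition word_eval :: "('a, 'b) monoid_scheme \<Rightarrow> ('a \<times> bool) list \<Rightarrow> 'a" where
  "word_eval G w = foldr (\<lambda>(s, e) acc. (if e then s else inv\<^bsub>G\<^esub> s) \<otimes>\<^bsub>G\<^esub> acc) w \<one>\<^bsub>G\<^esub>"

definition reduced_word :: "('a \<times> bool) list \<Rightarrow> bool" where
  "reduced_word w \<longleftrightarrow>
     (\<forall>i. Suc i < length w \<longrightarrow> \<not> (fst (w ! i) = fst (w ! Suc i) \<and> snd (w ! i) \<noteq> snd (w ! Suc i)))"

definition free_basis :: "('a, 'b) monoid_scheme \<Rightarrow> 'a set \<Rightarrow> bool" where
  "free_basis G S \<longleftrightarrow> group G \<and> S \<subseteq> carrier G \<and> generate G S = carrier G \<and>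
     (\<forall>w. set (map fst w) \<subseteq> S \<longrightarrow> reduced_word w \<longrightarrow> w \<noteq> [] \<longrightarrow> word_eval G w \<noteq> \<one>\<^bsub>G\<^esub>)"

definition comm_subgroup :: "('a, 'b) monoid_scheme \<Rightarrow> 'a set \<Rightarrow> 'a set \<Rightarrow> 'a set" where
  "comm_subgroup G A B = generate G
     {a \<otimes>\<^bsub>G\<^esub> b \<otimes>\<^bsub>G\<^esub> inv\<^bsub>G\<^esub> a \<otimes>\<^bsub>G\<^esub> inv\<^bsub>G\<^esub> b | a b. a \<in> A \<and> b \<in> B}"

fun lower_central :: "('a, 'b) monoid_scheme \<Rightarrow> nat \<Rightarrow> 'a set" where
  "lower_central G 0 = carrier G"
| "lower_central G (Suc 0) = carrier G"
| "lower_central G (Suc (Suc i)) = comm_subgroup G (lower_central G (Suc i)) (carrier G)"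

definition normal_closure :: "('a, 'b) monoid_scheme \<Rightarrow> 'a set \<Rightarrow> 'a set" where
  "normal_closure G A = generate G {g \<otimes>\<^bsub>G\<^esub> a \<otimes>\<^bsub>G\<^esub> inv\<^bsub>G\<^esub> g | g a. g \<in> carrier G \<and> a \<in> A}"

inductive_set endo_monoid :: "('a \<Rightarrow> 'a) set \<Rightarrow> ('a \<Rightarrow> 'a) set" for Phi where
  id_in: "id \<in> endo_monoid Phi"
| comp_in: "\<phi> \<in> Phi \<Longrightarrow> \<psi> \<in> endo_monoid Phi \<Longrightarrow> \<phi> \<circ> \<psi> \<in> endo_monoid Phi"

text \<open>The induced endomorphism phibar of M = tau(L), L = K_{n-1}:
  phibar(tau k) = tau(phi k) for k in L.\<close>
definition phibar :: "('a \<Rightarrow> 'h) \<Rightarrow> 'a set \<Rightarrow> ('a \<Rightarrow> 'a) \<Rightarrow> 'h \<Rightarrow> 'h" where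
  "phibar \<tau> L \<phi> m = \<tau> (\<phi> (SOME k. k \<in> L \<and> \<tau> k = m))"

end

theory Submission
  imports Defs
begin

lemma gen_hom_sub:
  assumes G: "group G" and h: "h \<in> hom G G" and A: "A \<subseteq> carrier G" and AB: "h ` A \<subseteq> B"
  shows "h ` generate G A \<subseteq> generate G B"
proof -
  interpret group_hom G G h using G h by (simp add: group_hom_def group_hom_axioms_def)
  have "h ` generate G A = generate G (h ` A)" using generate_img[OF A] by simp
  also have "\<dots> \<subseteq> generate G B" using AB by (rule G.mono_generate)
  finally show ?thesis .
qed

lemma comm_carrier:
  assumes G: "group G" and A: "A \<subseteq> carrier G"
  shows "comm_subgroup G A (carrier G) \<subseteq> carrier G"
proof -
  interpret group G by (rule G)
  show ?thesis unfolding comm_subgroup_def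
    by (rule generate_incl) (use A in auto)
qed

lemma comm_endo:
  assumes G: "group G" and h: "h \<in> hom G G" and A: "A \<subseteq> carrier G" and hA: "h ` A \<subseteq> A"
  shows "h ` comm_subgroup G A (carrier G) \<subseteq> comm_subgroup G A (carrier G)"
  unfolding comm_subgroup_def
proof (rule gen_hom_sub[OF G h])
  interpret group_hom G G h using G h by (simp add: group_hom_def group_hom_axioms_def)
  show "{a \<otimes>\<^bsub>G\<^esub> b \<otimes>\<^bsub>G\<^esub> inv\<^bsub>G\<^esub> a \<otimes>\<^bsub>G\<^esub> inv\<^bsub>G\<^esub> b |a b. a \<in> A \<and> b \<in> carrier G} \<subseteq> carrier G"
    using A by auto
  show "h ` {a \<otimes>\<^bsub>G\<^esub> b \<otimes>\<^bsub>G\<^esub> inv\<^bsub>G\<^esub> a \<otimes>\<^bsub>G\<^esub> inv\<^bsub>G\<^esub> b |a b. a \<in> A \<and> b \<in> carrier G}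
     \<subseteq> {a \<otimes>\<^bsub>G\<^esub> b \<otimes>\<^bsub>G\<^esub> inv\<^bsub>G\<^esub> a \<otimes>\<^bsub>G\<^esub> inv\<^bsub>G\<^esub> b |a b. a \<in> A \<and> b \<in> carrier G}"
  proof
    fix y assume "y \<in> h ` {a \<otimes>\<^bsub>G\<^esub> b \<otimes>\<^bsub>G\<^esub> inv\<^bsub>G\<^esub> a \<otimes>\<^bsub>G\<^esub> inv\<^bsub>G\<^esub> b |a b. a \<in> A \<and> b \<in> carrier G}"
    then obtain a b where ab: "a \<in> A" "b \<in> carrier G" and y: "y = h (a \<otimes>\<^bsub>G\<^esub> b \<otimes>\<^bsub>G\<^esub> inv\<^bsub>G\<^esub> a \<otimes>\<^bsub>G\<^esub> inv\<^bsub>G\<^esub> b)"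
      by blast
    have aG: "a \<in> carrier G" using ab A by auto
    have "y = h a \<otimes>\<^bsub>G\<^esub> h b \<otimes>\<^bsub>G\<^esub> inv\<^bsub>G\<^esub> h a \<otimes>\<^bsub>G\<^esub> inv\<^bsub>G\<^esub> h b"
      using y aG ab(2) by (simp add: hom_inv)
    moreover have "h a \<in> A" using hA ab by auto
    moreover have "h b \<in> carrier G" using ab by simp
    ultimately show "y \<in> {a \<otimes>\<^bsub>G\<^esub> b \<otimes>\<^bsub>G\<^esub> inv\<^bsub>G\<^esub> a \<otimes>\<^bsub>G\<^esub> inv\<^bsub>G\<^esub> b |a b. a \<in> A \<and> b \<in> carrier G}"
      by blast
  qed
qed

lemma lc_carrier: "group G \<Longrightarrow> lower_central G m \<subseteq> carrier G"
proof (induction G m rule: lower_central.induct)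
  case (3 G i)
  then show ?case using comm_carrier[OF 3(2) 3(1)[OF 3(2)]] by simp
qed auto

lemma lc_one: assumes G: "group G" shows "\<one>\<^bsub>G\<^esub> \<in> lower_central G m"
proof (cases m)
  case 0 then show ?thesis by (simp add: group.is_monoid[OF G] monoid.one_closed)
next
  case (Suc k) then show ?thesis
    by (cases k) (simp_all add: group.is_monoid[OF G] monoid.one_closed comm_subgroup_def generate.one)
qed

lemma lc_endo: "group G \<Longrightarrow> h \<in> hom G G \<Longrightarrow> h ` lower_central G m \<subseteq> lower_central G m"
proof (induction G m rule: lower_central.induct)
  case (1 G) then show ?case by (auto simp: hom_def)
next
  case (2 G) then show ?case by (auto simp: hom_def)
next
  case (3 G i)
  then show ?case
    using comm_endo[OF 3(2,3) lc_carrier[OF 3(2)] 3(1)[OF 3(2,3)]] by simp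
qed

lemma endo_monoid_props:
  assumes "\<psi> \<in> endo_monoid Phi" "\<forall>\<phi>\<in>Phi. \<phi> \<in> hom F F" "\<forall>\<phi>\<in>Phi. \<phi> ` K \<subseteq> K"
  shows "\<psi> \<in> hom F F \<and> \<psi> ` K \<subseteq> K"
  using assms(1)
proof induction
  case id_in then show ?case by (auto simp: hom_def)
next
  case (comp_in \<phi> \<psi>)
  then show ?case using assms(2,3) hom_compose[of \<psi> F F \<phi> F]
    by (auto simp: image_comp[symmetric] o_def) (blast+)
qed

lemma comm_trivial:
  fixes H (structure)
  assumes H: "group H" and a: "a \<in> carrier H" and b: "b \<in> carrier H"
    and e: "a \<otimes>\<^bsub>H\<^esub> b \<otimes>\<^bsub>H\<^esub> inv\<^bsub>H\<^esub> a \<otimes>\<^bsub>H\<^esub> inv\<^bsub>H\<^esub> b = \<one>\<^bsub>H\<^esub>"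
  shows "b \<otimes>\<^bsub>H\<^esub> a \<otimes>\<^bsub>H\<^esub> inv\<^bsub>H\<^esub> b = a"
proof -
  interpret group H by (rule H)
  have "(a \<otimes> b \<otimes> inv a \<otimes> inv b) \<otimes> (b \<otimes> a) = b \<otimes> a" using e a b by simp
  moreover have "(a \<otimes> b \<otimes> inv a \<otimes> inv b) \<otimes> (b \<otimes> a) = a \<otimes> b"
    using a b by (simp add: m_assoc flip: m_assoc[of "inv b" b a])
  ultimately have ab: "a \<otimes> b = b \<otimes> a" by simp
  have "b \<otimes> a \<otimes> inv b = a \<otimes> b \<otimes> inv b" using ab by simp
  also have "\<dots> = a" using a b by (simp add: m_assoc)
  finally show ?thesis .
qed

theorem mainTheorem7:
  fixes F :: "'f monoid" and H :: "'h monoid"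
    and S Q R :: "'f set" and Phi :: "('f \<Rightarrow> 'f) set"
    and K :: "'f set" and n :: nat and \<tau> :: "'f \<Rightarrow> 'h"
  assumes free: "free_basis F S" and finS: "finite S"
    and finQ: "finite Q" and QF: "Q \<subseteq> carrier F"
    and finR: "finite R" and RF: "R \<subseteq> carrier F"
    and finPhi: "finite Phi" and endo: "\<forall>\<phi>\<in>Phi. \<phi> \<in> hom F F"
    and K_def: "K = normal_closure F (Q \<union> (\<Union>\<phi>\<in>endo_monoid Phi. \<phi> ` R))"
    and invariant: "\<forall>\<phi>\<in>Phi. \<phi> ` K \<subseteq> K"
    and n3: "n \<ge> 3"
    and H: "group H"
    and tau_hom: "\<tau> \<in> hom F H" and tau_onto: "\<tau> ` carrier F = carrier H"
    and tau_ker: "kernel F H \<tau> = comm_subgroup F (K <#>\<^bsub>F\<^esub> lower_central F (n - 1)) (carrier F)"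
  shows "\<tau> ` K = generate H (\<tau> ` Q \<union>
           {phibar \<tau> (K <#>\<^bsub>F\<^esub> lower_central F (n - 1)) \<phi> (\<tau> r) | \<phi> r. \<phi> \<in> endo_monoid Phi \<and> r \<in> R})"
proof -
  have grpF: "group F" using free by (simp add: free_basis_def)
  interpret F: group F by (rule grpF)
  interpret Hg: group H by (rule H)
  interpret th: group_hom F H \<tau> using grpF H tau_hom by (simp add: group_hom_def group_hom_axioms_def)
  define XX where "XX = Q \<union> (\<Union>\<phi>\<in>endo_monoid Phi. \<phi> ` R)"
  define \<gamma> where "\<gamma> = lower_central F (n - 1)"
  define L where "L = K <#>\<^bsub>F\<^esub> \<gamma>"
  define Cj where "Cj = {g \<otimes>\<^bsub>F\<^esub> a \<otimes>\<^bsub>F\<^esub> inv\<^bsub>F\<^esub> g | g a. g \<in> carrier F \<and> a \<in> XX}"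
  have em: "\<And>\<phi>. \<phi> \<in> endo_monoid Phi \<Longrightarrow> \<phi> \<in> hom F F \<and> \<phi> ` K \<subseteq> K"
    using endo_monoid_props endo invariant by blast
  have Xc: "XX \<subseteq> carrier F"
    unfolding XX_def using QF RF em by (auto simp: hom_def Pi_def)
  have Cjc: "Cj \<subseteq> carrier F" unfolding Cj_def using Xc by auto
  have KCj: "K = generate F Cj" unfolding K_def normal_closure_def Cj_def XX_def by simp
  have Kc: "K \<subseteq> carrier F" unfolding KCj using Cjc by (rule F.generate_incl)
  have XK: "XX \<subseteq> K"
  proof
    fix a assume "a \<in> XX"
    then have "\<one>\<^bsub>F\<^esub> \<otimes>\<^bsub>F\<^esub> a \<otimes>\<^bsub>F\<^esub> inv\<^bsub>F\<^esub> \<one>\<^bsub>F\<^esub> \<in> Cj" unfolding Cj_def by blast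
    moreover have "\<one>\<^bsub>F\<^esub> \<otimes>\<^bsub>F\<^esub> a \<otimes>\<^bsub>F\<^esub> inv\<^bsub>F\<^esub> \<one>\<^bsub>F\<^esub> = a" using \<open>a \<in> XX\<close> Xc by auto
    ultimately show "a \<in> K" unfolding KCj by (metis generate.incl)
  qed
  have \<gamma>c: "\<gamma> \<subseteq> carrier F" unfolding \<gamma>_def by (rule lc_carrier[OF grpF])
  have \<gamma>1: "\<one>\<^bsub>F\<^esub> \<in> \<gamma>" unfolding \<gamma>_def by (rule lc_one[OF grpF])
  have KL: "K \<subseteq> L"
  proof
    fix x assume x: "x \<in> K"
    then have "x = x \<otimes>\<^bsub>F\<^esub> \<one>\<^bsub>F\<^esub>" using Kc by auto
    then show "x \<in> L" unfolding L_def set_mult_def using x \<gamma>1 by blast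
  qed
  have Lc: "L \<subseteq> carrier F" unfolding L_def set_mult_def using Kc \<gamma>c by auto
  have ker_eq: "kernel F H \<tau> = comm_subgroup F L (carrier F)" using tau_ker unfolding L_def \<gamma>_def .
  have cen: "\<tau> g \<otimes>\<^bsub>H\<^esub> \<tau> x \<otimes>\<^bsub>H\<^esub> inv\<^bsub>H\<^esub> \<tau> g = \<tau> x" if x: "x \<in> L" and g: "g \<in> carrier F" for x g
  proof -
    have xc: "x \<in> carrier F" using x Lc by auto
    have "x \<otimes>\<^bsub>F\<^esub> g \<otimes>\<^bsub>F\<^esub> inv\<^bsub>F\<^esub> x \<otimes>\<^bsub>F\<^esub> inv\<^bsub>F\<^esub> g \<in> comm_subgroup F L (carrier F)"
      unfolding comm_subgroup_def using x g by (blast intro: generate.incl)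
    then have "\<tau> (x \<otimes>\<^bsub>F\<^esub> g \<otimes>\<^bsub>F\<^esub> inv\<^bsub>F\<^esub> x \<otimes>\<^bsub>F\<^esub> inv\<^bsub>F\<^esub> g) = \<one>\<^bsub>H\<^esub>"
      using ker_eq[symmetric] by (simp add: kernel_def)
    then have "\<tau> x \<otimes>\<^bsub>H\<^esub> \<tau> g \<otimes>\<^bsub>H\<^esub> inv\<^bsub>H\<^esub> \<tau> x \<otimes>\<^bsub>H\<^esub> inv\<^bsub>H\<^esub> \<tau> g = \<one>\<^bsub>H\<^esub>"
      using xc g by simp
    then show ?thesis using comm_trivial[OF H] xc g by simp
  qed
  have Linv: "\<phi> ` L \<subseteq> L" if \<phi>: "\<phi> \<in> endo_monoid Phi" for \<phi>
  proof
    have ph: "\<phi> \<in> hom F F" and phK: "\<phi> ` K \<subseteq> K" using em[OF \<phi>] by auto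
    have phg: "\<phi> ` \<gamma> \<subseteq> \<gamma>" unfolding \<gamma>_def by (rule lc_endo[OF grpF ph])
    fix y assume "y \<in> \<phi> ` L"
    then obtain k g where k: "k \<in> K" and g: "g \<in> \<gamma>" and y: "y = \<phi> (k \<otimes>\<^bsub>F\<^esub> g)"
      unfolding L_def set_mult_def by blast
    have "k \<in> carrier F" "g \<in> carrier F" using k g Kc \<gamma>c by auto
    then have "y = \<phi> k \<otimes>\<^bsub>F\<^esub> \<phi> g" using y hom_mult[OF ph] by simp
    moreover have "\<phi> k \<in> K" "\<phi> g \<in> \<gamma>" using k g phK phg by auto
    ultimately show "y \<in> L" unfolding L_def set_mult_def by blast
  qed
  have kerinv: "\<phi> c \<in> kernel F H \<tau>" if \<phi>: "\<phi> \<in> endo_monoid Phi" and c: "c \<in> kernel F H \<tau>" for \<phi> c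
    using comm_endo[OF grpF _ Lc Linv[OF \<phi>]] em[OF \<phi>] c unfolding ker_eq by blast
  have pb: "phibar \<tau> L \<phi> (\<tau> r) = \<tau> (\<phi> r)" if \<phi>: "\<phi> \<in> endo_monoid Phi" and r: "r \<in> R" for \<phi> r
  proof -
    have ph: "\<phi> \<in> hom F F" using em[OF \<phi>] by auto
    have rc: "r \<in> carrier F" using r RF by auto
    have "r \<in> id ` R" using r by simp
    then have "r \<in> XX" unfolding XX_def using endo_monoid.id_in[of Phi] by blast
    then have rL: "r \<in> L" using XK KL by blast
    define k where "k = (SOME k. k \<in> L \<and> \<tau> k = \<tau> r)"
    have "k \<in> L \<and> \<tau> k = \<tau> r" unfolding k_def by (rule someI[of _ r]) (use rL in simp)
    then have kL: "k \<in> L" and tk: "\<tau> k = \<tau> r" by auto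
    have kc: "k \<in> carrier F" using kL Lc by auto
    define c where "c = inv\<^bsub>F\<^esub> r \<otimes>\<^bsub>F\<^esub> k"
    have cc: "c \<in> carrier F" unfolding c_def using rc kc by simp
    have "\<tau> c = \<one>\<^bsub>H\<^esub>" unfolding c_def using rc kc tk by simp
    then have "c \<in> kernel F H \<tau>" using cc by (simp add: kernel_def)
    then have "\<phi> c \<in> kernel F H \<tau>" by (rule kerinv[OF \<phi>])
    then have tpc: "\<tau> (\<phi> c) = \<one>\<^bsub>H\<^esub>" by (simp add: kernel_def)
    have kk: "k = r \<otimes>\<^bsub>F\<^esub> c" unfolding c_def using rc kc by (simp add: F.m_assoc[symmetric])
    have "\<phi> k = \<phi> r \<otimes>\<^bsub>F\<^esub> \<phi> c" using kk ph rc cc by (simp add: hom_mult)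
    moreover have "\<phi> r \<in> carrier F" "\<phi> c \<in> carrier F" using ph rc cc by (auto simp: hom_def Pi_def)
    ultimately have "\<tau> (\<phi> k) = \<tau> (\<phi> r)" using tpc by simp
    then show ?thesis unfolding phibar_def k_def[symmetric] .
  qed
  have rhs: "\<tau> ` Q \<union> {phibar \<tau> L \<phi> (\<tau> r) | \<phi> r. \<phi> \<in> endo_monoid Phi \<and> r \<in> R} = \<tau> ` XX"
  proof -
    have "{phibar \<tau> L \<phi> (\<tau> r) | \<phi> r. \<phi> \<in> endo_monoid Phi \<and> r \<in> R}
          = {\<tau> (\<phi> r) | \<phi> r. \<phi> \<in> endo_monoid Phi \<and> r \<in> R}"
      using pb by metis
    also have "\<dots> = \<tau> ` (\<Union>\<phi>\<in>endo_monoid Phi. \<phi> ` R)" by blast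
    finally show ?thesis unfolding XX_def by (simp add: image_Un)
  qed
  have tCj: "\<tau> ` Cj = \<tau> ` XX"
  proof
    show "\<tau> ` Cj \<subseteq> \<tau> ` XX"
    proof
      fix y assume "y \<in> \<tau> ` Cj"
      then obtain g a where g: "g \<in> carrier F" and a: "a \<in> XX" and y: "y = \<tau> (g \<otimes>\<^bsub>F\<^esub> a \<otimes>\<^bsub>F\<^esub> inv\<^bsub>F\<^esub> g)"
        unfolding Cj_def by blast
      have ac: "a \<in> carrier F" using a Xc by auto
      have "y = \<tau> g \<otimes>\<^bsub>H\<^esub> \<tau> a \<otimes>\<^bsub>H\<^esub> inv\<^bsub>H\<^esub> \<tau> g" using y g ac by simp
      also have "\<dots> = \<tau> a" using cen[of a g] a XK KL g by auto
      finally show "y \<in> \<tau> ` XX" using a by simp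
    qed
  next
    show "\<tau> ` XX \<subseteq> \<tau> ` Cj"
    proof
      fix y assume "y \<in> \<tau> ` XX"
      then obtain a where a: "a \<in> XX" and y: "y = \<tau> a" by blast
      have "\<one>\<^bsub>F\<^esub> \<otimes>\<^bsub>F\<^esub> a \<otimes>\<^bsub>F\<^esub> inv\<^bsub>F\<^esub> \<one>\<^bsub>F\<^esub> \<in> Cj" unfolding Cj_def using a by blast
      moreover have "\<one>\<^bsub>F\<^esub> \<otimes>\<^bsub>F\<^esub> a \<otimes>\<^bsub>F\<^esub> inv\<^bsub>F\<^esub> \<one>\<^bsub>F\<^esub> = a" using a Xc by auto
      ultimately show "y \<in> \<tau> ` Cj" using y by (metis imageI)
    qed
  qed
  have "\<tau> ` K = generate H (\<tau> ` Cj)" unfolding KCj using th.generate_img[OF Cjc] by simp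
  then show ?thesis using tCj rhs unfolding L_def \<gamma>_def by simp
qed

end
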